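(* Let $Z$ be a feasible point of the SDP relaxation described in the context, with first-row data $(z_+,z_-,\rho)$, and let $(x_+^{Q},x_-^{Q},r^{Q})$ be its reconstruction, i.e. $x_\pm^{Q}=z_\pm$ and $r^{Q}=\max\{r\in[0,1]: (A_\delta z_+ + A_\delta z_- + b_\delta)\,r + A_c z_+ - A_c z_- - b_c\le 0\}$. If $(x_+^{Q},x_-^{Q})$ is a strictly efficient solution of the LP of robustness level $r^{Q}$, then $(x_+^{Q},x_-^{Q},r^{Q})$ is an efficient solution of the QCQP.
   Context: Let $k,m,n\in\mathbb{N}$. Let $A_c,A_\delta\in\mathbb{R}^{m\times n}$ with $A_\delta\ge 0$ entrywise, $b_c,b_\delta\in\mathbb{R}^m$ with $b_\delta\ge0$, $G\in\mathbb{R}^{k\times n}$, and $\ell,u\in\mathbb{R}^n$ with $\ell\le u$. All vector inequalities are componentwise. QCQP: variables $x_+,x_-\in\mathbb{R}^n_{\ge0}$, $r\in[0,1]$, subject to $A_cx_+-A_cx_-+rA_\delta x_++rA_\delta x_-+rb_\delta-b_c\le0$ and $\ell\le x_+-x_-\le u$; vector objective $F(x_+,x_-,r)=(G(x_+-x_-),-r)\in\mathbb{R}^{k+1}$, minimized in the Pareto sense. LP of robustness level $r$ (for fixed $r\in[0,1]$): variables $x_+,x_-\in\mathbb{R}^n_{\ge0}$, subject to $(A_c+rA_\delta)x_+-(A_c-rA_\delta)x_-\le b_c-rb_\delta$ and $\ell\le x_+-x_-\le u$; vector objective $G(x_+-x_-)\in\mathbb{R}^k$, minimized in the Pareto sense.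 SDP relaxation: variable a symmetric positive semidefinite matrix $Z$ of size $(2n+2)\times(2n+2)$ written in block form with row/column blocks of sizes $1,n,n,1$: $Z=\begin{pmatrix} Z_{00} & z_+^T & z_-^T & \rho\\ z_+ & * & * & w_+\\ z_- & * & * & w_-\\ \rho & w_+^T & w_-^T & \sigma\end{pmatrix}$, with $z_\pm,w_\pm\in\mathbb{R}^n$, $\rho,\sigma\in\mathbb{R}$. Constraints: $Z_{00}=1$; $A_cz_+-A_cz_-+A_\delta(w_++w_-)+\rho\, b_\delta-b_c\le0$; $\ell\le z_+-z_-\le u$; $z_+,z_-\ge0$, $\rho\ge0$, $w_+,w_-\ge0$; $\sigma\le1$. Vector objective $(G(z_+-z_-),-\rho)\in\mathbb{R}^{k+1}$, minimized in the Pareto sense. Efficiency (for minimizing a vector function $f$ over a feasible set $\mathcal{X}$): $x^*\in\mathcal{X}$ is efficient if there is no $x\in\mathcal{X}$ with $f(x)\le f(x^* )$ and $f(x)\ne f(x^* )$; weakly efficient if there is no $x\in\mathcal{X}$ with $f(x)<f(x^* )$ (all components strict); strictly efficient if there is no $x\in\mathcal{X}$, $x\neq x^*$, with $f(x)\le f(x^* )$. For $\epsilon\ge0$, $x^*$ is weakly $\epsilon$-efficient if there is no $x\in\mathcal{X}$ with $f(x)<f(x^* )-\epsilon\mathbb{1}$, where $\mathbb{1}$ is the all-ones vector. *)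

theory Defs
  imports "HOL-Analysis.Analysis"
begin

text \<open>Vector orders on real^'n are componentwise (less_eq_vec_def, less_vec_def).\<close>

definition efficient :: "'a set \<Rightarrow> ('a \<Rightarrow> 'b::order) \<Rightarrow> 'a \<Rightarrow> bool" where
  "efficient X f x \<longleftrightarrow> x \<in> X \<and> \<not> (\<exists>y\<in>X. f y \<le> f x \<and> f y \<noteq> f x)"

definition strictly_efficient :: "'a set \<Rightarrow> ('a \<Rightarrow> 'b::order) \<Rightarrow> 'a \<Rightarrow> bool" where
  "strictly_efficient X f x \<longleftrightarrow> x \<in> X \<and> \<not> (\<exists>y\<in>X. y \<noteq> x \<and> f y \<le> f x)"

definition qcqp_feasible ::
  "real^'n^'m \<Rightarrow> real^'n^'m \<Rightarrow> real^'m \<Rightarrow> real^'m \<Rightarrow> real^'n \<Rightarrow> real^'n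
   \<Rightarrow> ((real^'n) \<times> (real^'n) \<times> real) set" where
  "qcqp_feasible Ac Ad bc bd l u =
    {(xp, xm, r). 0 \<le> xp \<and> 0 \<le> xm \<and> 0 \<le> r \<and> r \<le> 1 \<and>
      Ac *v xp - Ac *v xm + r *\<^sub>R (Ad *v xp) + r *\<^sub>R (Ad *v xm) + r *\<^sub>R bd - bc \<le> 0 \<and>
      l \<le> xp - xm \<and> xp - xm \<le> u}"

definition qcqp_obj :: "real^'n^'k \<Rightarrow> (real^'n) \<times> (real^'n) \<times> real \<Rightarrow> real^('k + unit)" where
  "qcqp_obj G = (\<lambda>(xp, xm, r). \<chi> i. (case i of Inl j \<Rightarrow> (G *v (xp - xm)) $ j | Inr _ \<Rightarrow> - r))"

definition lp_feasible ::
  "real^'n^'m \<Rightarrow> real^'n^'m \<Rightarrow> real^'m \<Rightarrow> real^'m \<Rightarrow> real^'n \<Rightarrow> real^'n \<Rightarrow> real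
   \<Rightarrow> ((real^'n) \<times> (real^'n)) set" where
  "lp_feasible Ac Ad bc bd l u r =
    {(xp, xm). 0 \<le> xp \<and> 0 \<le> xm \<and>
      (Ac + r *\<^sub>R Ad) *v xp - (Ac - r *\<^sub>R Ad) *v xm \<le> bc - r *\<^sub>R bd \<and>
      l \<le> xp - xm \<and> xp - xm \<le> u}"

definition lp_obj :: "real^'n^'k \<Rightarrow> (real^'n) \<times> (real^'n) \<Rightarrow> real^'k" where
  "lp_obj G = (\<lambda>(xp, xm). G *v (xp - xm))"

definition psd :: "real^'a^'a \<Rightarrow> bool" where
  "psd Z \<longleftrightarrow> transpose Z = Z \<and> (\<forall>x. 0 \<le> x \<bullet> (Z *v x))"

text \<open>SDP matrix indices: blocks of sizes 1, n, n, 1 as unit + 'n + 'n + unit.\<close>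
type_synonym 'n sdpidx = "unit + 'n + 'n + unit"

definition i0 :: "'n sdpidx" where "i0 = Inl ()"
definition ip :: "'n \<Rightarrow> 'n sdpidx" where "ip j = Inr (Inl j)"
definition im :: "'n \<Rightarrow> 'n sdpidx" where "im j = Inr (Inr (Inl j))"
definition ilast :: "'n sdpidx" where "ilast = Inr (Inr (Inr ()))"

definition sdp_zp :: "real^('n::finite sdpidx)^('n sdpidx) \<Rightarrow> real^'n" where
  "sdp_zp Z = (\<chi> j. Z $ i0 $ ip j)"
definition sdp_zm :: "real^('n::finite sdpidx)^('n sdpidx) \<Rightarrow> real^'n" where
  "sdp_zm Z = (\<chi> j. Z $ i0 $ im j)"
definition sdp_rho :: "real^('n::finite sdpidx)^('n sdpidx) \<Rightarrow> real" where
  "sdp_rho Z = Z $ i0 $ ilast"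
definition sdp_wp :: "real^('n::finite sdpidx)^('n sdpidx) \<Rightarrow> real^'n" where
  "sdp_wp Z = (\<chi> j. Z $ ip j $ ilast)"
definition sdp_wm :: "real^('n::finite sdpidx)^('n sdpidx) \<Rightarrow> real^'n" where
  "sdp_wm Z = (\<chi> j. Z $ im j $ ilast)"
definition sdp_sigma :: "real^('n::finite sdpidx)^('n sdpidx) \<Rightarrow> real" where
  "sdp_sigma Z = Z $ ilast $ ilast"

definition sdp_feasible ::
  "real^'n^'m \<Rightarrow> real^'n^'m \<Rightarrow> real^'m \<Rightarrow> real^'m \<Rightarrow> real^'n \<Rightarrow> real^'n
   \<Rightarrow> real^('n::finite sdpidx)^('n sdpidx) \<Rightarrow> bool" where
  "sdp_feasible Ac Ad bc bd l u Z \<longleftrightarrow> psd Z \<and> Z $ i0 $ i0 = 1 \<and>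
     Ac *v sdp_zp Z - Ac *v sdp_zm Z + Ad *v (sdp_wp Z + sdp_wm Z) + sdp_rho Z *\<^sub>R bd - bc \<le> 0 \<and>
     l \<le> sdp_zp Z - sdp_zm Z \<and> sdp_zp Z - sdp_zm Z \<le> u \<and>
     0 \<le> sdp_zp Z \<and> 0 \<le> sdp_zm Z \<and> 0 \<le> sdp_rho Z \<and> 0 \<le> sdp_wp Z \<and> 0 \<le> sdp_wm Z \<and>
     sdp_sigma Z \<le> 1"

text \<open>Reconstructed robustness level r^Q (the maximum exists: the set contains 0 for
  SDP-feasible Z and is compact).\<close>
definition recon_r ::
  "real^'n^'m \<Rightarrow> real^'n^'m \<Rightarrow> real^'m \<Rightarrow> real^'m \<Rightarrow> real^('n::finite sdpidx)^('n sdpidx) \<Rightarrow> real" where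
  "recon_r Ac Ad bc bd Z = (GREATEST r. 0 \<le> r \<and> r \<le> 1 \<and>
     r *\<^sub>R (Ad *v sdp_zp Z + Ad *v sdp_zm Z + bd) + Ac *v sdp_zp Z - Ac *v sdp_zm Z - bc \<le> 0)"

end

theory Submission
  imports Defs
begin

lemma mv_add: "((A + B) *v x) = A *v x + B *v (x::real^'n)"
  by (simp add: vec_eq_iff matrix_vector_mult_def sum.distrib algebra_simps)

lemma mv_diff: "((A - B) *v x) = A *v x - B *v (x::real^'n)"
  by (simp add: vec_eq_iff matrix_vector_mult_def sum_subtractf algebra_simps)

lemma mv_scale: "((r *\<^sub>R A) *v x) = r *\<^sub>R (A *v (x::real^'n))"
  by (simp add: vec_eq_iff matrix_vector_mult_def sum_distrib_left algebra_simps)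

lemma mv_nonneg: "0 \<le> A \<Longrightarrow> 0 \<le> x \<Longrightarrow> 0 \<le> A *v (x::real^'n)"
  unfolding less_eq_vec_def matrix_vector_mult_def
  by (auto intro!: sum_nonneg mult_nonneg_nonneg)

lemma greatest_exists:
  fixes c d :: "real^'m"
  assumes c: "0 \<le> c" and d: "d \<le> 0"
  defines "P \<equiv> (\<lambda>r::real. 0 \<le> r \<and> r \<le> 1 \<and> r *\<^sub>R c + d \<le> 0)"
  shows "P (Greatest P) \<and> (\<forall>r. P r \<longrightarrow> r \<le> Greatest P)"
proof -
  define S where "S = Collect P"
  have P0: "P 0" using d by (simp add: P_def)
  have ne: "S \<noteq> {}" using P0 S_def by auto
  have bdd: "bdd_above S" unfolding S_def P_def by (rule bdd_aboveI[of _ 1]) auto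
  have up: "r \<le> Sup S" if "P r" for r using that bdd S_def by (auto intro: cSup_upper)
  have "P (Sup S)"
    unfolding P_def
  proof (intro conjI)
    show "0 \<le> Sup S" using up[OF P0] .
    show "Sup S \<le> 1" using ne by (rule cSup_least) (auto simp: S_def P_def)
    show "Sup S *\<^sub>R c + d \<le> 0"
      unfolding less_eq_vec_def
    proof
      fix i
      show "(Sup S *\<^sub>R c + d) $ i \<le> 0 $ i"
      proof (cases "c $ i = 0")
        case True then show ?thesis using d by (simp add: less_eq_vec_def)
      next
        case False
        then have ci: "c $ i > 0" using c by (auto simp: less_eq_vec_def order_le_less)
        have "Sup S \<le> - d $ i / c $ i"
          using ne
        proof (rule cSup_least)
          fix r assume "r \<in> S"
          then have "r * c $ i + d $ i \<le> 0" by (auto simp: S_def P_def less_eq_vec_def)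
          then show "r \<le> - d $ i / c $ i" using ci by (simp add: field_simps)
        qed
        then show ?thesis using ci by (simp add: field_simps)
      qed
    qed
  qed
  moreover have "Greatest P = Sup S"
    by (rule Greatest_equality) (use \<open>P (Sup S)\<close> up in auto)
  ultimately show ?thesis using up by auto
qed

theorem mainTheorem1:
  fixes Ac Ad :: "real^'n^'m" and bc bd :: "real^'m" and G :: "real^'n^'k"
    and l u :: "real^'n" and Z :: "real^('n sdpidx)^('n sdpidx)"
  assumes "0 \<le> Ad" and "0 \<le> bd" and "l \<le> u"
    and "sdp_feasible Ac Ad bc bd l u Z"
    and "strictly_efficient (lp_feasible Ac Ad bc bd l u (recon_r Ac Ad bc bd Z)) (lp_obj G)
           (sdp_zp Z, sdp_zm Z)"
  shows "efficient (qcqp_feasible Ac Ad bc bd l u) (qcqp_obj G)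
           (sdp_zp Z, sdp_zm Z, recon_r Ac Ad bc bd Z)"
proof -
  define zp where "zp = sdp_zp Z"
  define zm where "zm = sdp_zm Z"
  define rs where "rs = recon_r Ac Ad bc bd Z"
  define c where "c = Ad *v zp + Ad *v zm + bd"
  define d where "d = Ac *v zp - Ac *v zm - bc"
  define P where "P = (\<lambda>r::real. 0 \<le> r \<and> r \<le> 1 \<and> r *\<^sub>R c + d \<le> 0)"
  have F: "l \<le> zp - zm" "zp - zm \<le> u" "0 \<le> zp" "0 \<le> zm" "0 \<le> sdp_rho Z"
    "0 \<le> sdp_wp Z" "0 \<le> sdp_wm Z"
    "Ac *v zp - Ac *v zm + Ad *v (sdp_wp Z + sdp_wm Z) + sdp_rho Z *\<^sub>R bd - bc \<le> 0"
    using assms(4) unfolding sdp_feasible_def zp_def zm_def by auto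
  have c0: "0 \<le> c" unfolding c_def using mv_nonneg[OF assms(1)] F(3,4) assms(2)
    by (simp add: add_nonneg_nonneg)
  have w0: "0 \<le> Ad *v (sdp_wp Z + sdp_wm Z)" using mv_nonneg[OF assms(1)] F(6,7) by simp
  have rb: "0 \<le> sdp_rho Z *\<^sub>R bd" using F(5) assms(2) by (simp add: less_eq_vec_def)
  have d0: "d \<le> 0" using F(8) w0 rb unfolding d_def less_eq_vec_def
    by (smt (verit) vector_add_component vector_minus_component zero_index)
  have rsP: "rs = Greatest P" unfolding rs_def recon_r_def P_def c_def d_def zp_def zm_def
    by (simp add: algebra_simps)
  from greatest_exists[OF c0 d0] have G1: "P rs" and G2: "\<And>r. P r \<Longrightarrow> r \<le> rs"
    unfolding rsP P_def by auto
  have Peq: "P r \<longleftrightarrow> (zp, zm, r) \<in> qcqp_feasible Ac Ad bc bd l u" for r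
    unfolding P_def qcqp_feasible_def c_def d_def using F(1-4)
    by (simp add: scaleR_right_distrib algebra_simps)
  have feas: "(zp, zm, rs) \<in> qcqp_feasible Ac Ad bc bd l u" using G1 Peq by simp
  have SE: "\<And>yp ym. (yp, ym) \<in> lp_feasible Ac Ad bc bd l u rs \<Longrightarrow>
      lp_obj G (yp, ym) \<le> lp_obj G (zp, zm) \<Longrightarrow> (yp, ym) = (zp, zm)"
    using assms(5) unfolding strictly_efficient_def zp_def zm_def rs_def by blast
  show ?thesis
    unfolding efficient_def zp_def[symmetric] zm_def[symmetric] rs_def[symmetric]
  proof (intro conjI feas notI)
    assume "\<exists>y\<in>qcqp_feasible Ac Ad bc bd l u.
      qcqp_obj G y \<le> qcqp_obj G (zp, zm, rs) \<and> qcqp_obj G y \<noteq> qcqp_obj G (zp, zm, rs)"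
    then obtain yp ym r where yf: "(yp, ym, r) \<in> qcqp_feasible Ac Ad bc bd l u"
      and le: "qcqp_obj G (yp, ym, r) \<le> qcqp_obj G (zp, zm, rs)"
      and ne: "qcqp_obj G (yp, ym, r) \<noteq> qcqp_obj G (zp, zm, rs)" by auto
    have leG: "G *v (yp - ym) \<le> G *v (zp - zm)"
      unfolding less_eq_vec_def
    proof
      fix j show "(G *v (yp - ym)) $ j \<le> (G *v (zp - zm)) $ j"
        using le unfolding less_eq_vec_def qcqp_obj_def
        by (auto dest: spec[of _ "Inl j"])
    qed
    have rr: "rs \<le> r" using le unfolding less_eq_vec_def qcqp_obj_def
      by (auto dest: spec[of _ "Inr ()"])
    have Y: "0 \<le> yp" "0 \<le> ym" "0 \<le> r" "r \<le> 1" "l \<le> yp - ym" "yp - ym \<le> u"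
      "Ac *v yp - Ac *v ym + r *\<^sub>R (Ad *v yp) + r *\<^sub>R (Ad *v ym) + r *\<^sub>R bd - bc \<le> 0"
      using yf unfolding qcqp_feasible_def by auto
    have a1: "0 \<le> Ad *v yp" "0 \<le> Ad *v ym" using mv_nonneg[OF assms(1)] Y(1,2) by auto
    have rs0: "0 \<le> rs" using G1 P_def by simp
    have "(Ac + rs *\<^sub>R Ad) *v yp - (Ac - rs *\<^sub>R Ad) *v ym \<le> bc - rs *\<^sub>R bd"
      unfolding mv_add mv_diff mv_scale less_eq_vec_def
    proof
      fix i
      have h: "(Ac *v yp) $ i - (Ac *v ym) $ i + r * (Ad *v yp) $ i + r * (Ad *v ym) $ i
          + r * bd $ i - bc $ i \<le> 0"
        using Y(7) unfolding less_eq_vec_def by (auto dest: spec[of _ i])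
      have p: "0 \<le> (Ad *v yp) $ i" "0 \<le> (Ad *v ym) $ i" "0 \<le> bd $ i"
        using a1 assms(2) unfolding less_eq_vec_def by auto
      have "rs * (Ad *v yp) $ i \<le> r * (Ad *v yp) $ i" using p rr by (simp add: mult_right_mono)
      moreover have "rs * (Ad *v ym) $ i \<le> r * (Ad *v ym) $ i" using p rr by (simp add: mult_right_mono)
      moreover have "rs * bd $ i \<le> r * bd $ i" using p rr by (simp add: mult_right_mono)
      ultimately show "((Ac *v yp + rs *\<^sub>R (Ad *v yp)) - (Ac *v ym - rs *\<^sub>R (Ad *v ym))) $ i
          \<le> (bc - rs *\<^sub>R bd) $ i" using h by simp
    qed
    then have "(yp, ym) \<in> lp_feasible Ac Ad bc bd l u rs"
      unfolding lp_feasible_def using Y by auto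
    moreover have "lp_obj G (yp, ym) \<le> lp_obj G (zp, zm)" using leG by (simp add: lp_obj_def)
    ultimately have eq: "yp = zp" "ym = zm" using SE by auto
    have "r \<noteq> rs" using ne eq unfolding qcqp_obj_def by auto
    moreover have "r \<le> rs" using G2 Peq yf eq by auto
    ultimately show False using rr by simp
  qed
qed

end
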